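(* Let $G=(V,E)$ be an unweighted graph with $n$ vertices and let $k\geq 2$ be an integer. Run the clustering defined in the context with $r=k-1$ and $p=1-n^{-1/k}$. Let $T=\{(p_{c_x}(x),x): x\in V,\ x\neq c_x\}$ be the support forest and let $F=\bigcup_{x\in V}C(x)$, where $C(x)=\{(x,p_u(x)) : u\neq x,\ d^{(u)}(s,x)=d_{G'}(s,x)\}\cup\{(x,p_u(x)) : u\neq x,\ d^{(u)}(s,x)=d_{G'}(s,x)+1,\ \mathrm{ID}(u)<\mathrm{ID}(c_x)\}$. Then, for every outcome of the sampled values, $H=(V,T\cup F)$ is a spanner of $G$ of stretch $2k-1$, i.e., $d_H(u,v)\leq (2k-1)\,d_G(u,v)$ for all $u,v\in V$.
   Context: Setting (the clustering): $G=(V,E)$ is an unweighted graph with shortest-path distance $d_G$, and each vertex has a distinct identifier $\mathrm{ID}(v)$. Let $p\in(0,1)$ and $r\in\mathbb{N}$. Let $\mathrm{GeomCap}(p,r)$ be the distribution on $\{0,\dots,r\}$ with $\Pr[=i]=p(1-p)^i$ for $0\leq i\leq r-1$ and $\Pr[=r]=(1-p)^r$. Each vertex $v$ independently samples $\delta_v\sim\mathrm{GeomCap}(p,r)$. For $u,x\in V$ define $d^{(u)}(s,x):=r-\delta_u+d_G(u,x)$ and the level $d_{G'}(s,x):=\min_{u\in V} d^{(u)}(s,x)$. The cluster center $c_x$ of $x$ is the vertex $u$ with smallest $\mathrm{ID}$ among those with $d^{(u)}(s,x)=d_{G'}(s,x)$. For $u\neq x$ with $d_G(u,x)<\infty$,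 $p_u(x)$ denotes the predecessor of $x$ on an arbitrary but fixed shortest path from $u$ to $x$ in $G$. *)

theory Defs
  imports Main "HOL-Library.Extended_Nat"
begin

definition gdist :: "('a \<times> 'a) set \<Rightarrow> 'a \<Rightarrow> 'a \<Rightarrow> enat" where
  "gdist E u v = (INF xs \<in> {xs. xs \<noteq> [] \<and> hd xs = u \<and> last xs = v \<and>
                                successively (\<lambda>a b. (a, b) \<in> E) xs}.
                   enat (length xs - 1))"

definition dU :: "('a \<times> 'a) set \<Rightarrow> nat \<Rightarrow> ('a \<Rightarrow> nat) \<Rightarrow> 'a \<Rightarrow> 'a \<Rightarrow> enat" where
  "dU E r \<delta> u x = enat (r - \<delta> u) + gdist E u x"

definition level :: "'a set \<Rightarrow> ('a \<times> 'a) set \<Rightarrow> nat \<Rightarrow> ('a \<Rightarrow> nat) \<Rightarrow> 'a \<Rightarrow> enat" where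
  "level V E r \<delta> x = (INF u \<in> V. dU E r \<delta> u x)"

definition center :: "'a set \<Rightarrow> ('a \<times> 'a) set \<Rightarrow> nat \<Rightarrow> ('a \<Rightarrow> nat) \<Rightarrow> ('a \<Rightarrow> nat) \<Rightarrow> 'a \<Rightarrow> 'a" where
  "center V E r \<delta> ID x = arg_min ID (\<lambda>u. u \<in> V \<and> dU E r \<delta> u x = level V E r \<delta> x)"

definition valid_pred :: "'a set \<Rightarrow> ('a \<times> 'a) set \<Rightarrow> ('a \<Rightarrow> 'a \<Rightarrow> 'a) \<Rightarrow> bool" where
  "valid_pred V E pr \<longleftrightarrow> (\<forall>u\<in>V. \<forall>x\<in>V. u \<noteq> x \<and> gdist E u x \<noteq> \<infinity> \<longrightarrow>
      pr u x \<in> V \<and> (pr u x, x) \<in> E \<and> gdist E u (pr u x) + 1 = gdist E u x)"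

definition supportT :: "'a set \<Rightarrow> ('a \<times> 'a) set \<Rightarrow> nat \<Rightarrow> ('a \<Rightarrow> nat) \<Rightarrow> ('a \<Rightarrow> nat)
    \<Rightarrow> ('a \<Rightarrow> 'a \<Rightarrow> 'a) \<Rightarrow> ('a \<times> 'a) set" where
  "supportT V E r \<delta> ID pr =
     {(pr (center V E r \<delta> ID x) x, x) | x. x \<in> V \<and> x \<noteq> center V E r \<delta> ID x}"

definition Cset :: "'a set \<Rightarrow> ('a \<times> 'a) set \<Rightarrow> nat \<Rightarrow> ('a \<Rightarrow> nat) \<Rightarrow> ('a \<Rightarrow> nat)
    \<Rightarrow> ('a \<Rightarrow> 'a \<Rightarrow> 'a) \<Rightarrow> 'a \<Rightarrow> ('a \<times> 'a) set" where
  "Cset V E r \<delta> ID pr x =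
     {(x, pr u x) | u. u \<in> V \<and> u \<noteq> x \<and> dU E r \<delta> u x = level V E r \<delta> x}
   \<union> {(x, pr u x) | u. u \<in> V \<and> u \<noteq> x \<and> dU E r \<delta> u x = level V E r \<delta> x + 1
         \<and> ID u < ID (center V E r \<delta> ID x)}"

definition spannerH :: "'a set \<Rightarrow> ('a \<times> 'a) set \<Rightarrow> nat \<Rightarrow> ('a \<Rightarrow> nat) \<Rightarrow> ('a \<Rightarrow> nat)
    \<Rightarrow> ('a \<Rightarrow> 'a \<Rightarrow> 'a) \<Rightarrow> ('a \<times> 'a) set" where
  "spannerH V E r \<delta> ID pr =
     (let S = supportT V E r \<delta> ID pr \<union> (\<Union>x\<in>V. Cset V E r \<delta> ID pr x) in S \<union> S\<inverse>)"

end

theory Submission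
  imports Defs
begin


abbreviation walk where "walk E xs u v \<equiv> xs \<noteq> [] \<and> hd xs = u \<and> last xs = v \<and> successively (\<lambda>a b. (a, b) \<in> E) xs"

lemma gdist_le_walk: "walk E xs u v \<Longrightarrow> gdist E u v \<le> enat (length xs - 1)"
  unfolding gdist_def by (rule INF_lower) auto

lemma gdist_attained:
  assumes "gdist E u v \<noteq> \<infinity>"
  shows "\<exists>xs. walk E xs u v \<and> gdist E u v = enat (length xs - 1)"
proof -
  let ?W = "{xs. walk E xs u v}"
  let ?A = "(\<lambda>xs. enat (length xs - 1)) ` ?W"
  have ne: "?A \<noteq> {}"
  proof
    assume "?A = {}"
    moreover have "gdist E u v = Inf ?A" unfolding gdist_def ..
    ultimately have "gdist E u v = Inf {}" by metis
    then show False using assms by (simp add: top_enat_def)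
  qed
  then obtain a where "a \<in> ?A" by blast
  then have "Inf ?A \<in> ?A" unfolding Inf_enat_def using ne by (auto intro: LeastI)
  then show ?thesis unfolding gdist_def by auto
qed

lemma gdist_refl: "gdist E u u = 0"
  using gdist_le_walk[where E=E and xs="[u]" and u=u and v=u] by (simp add: zero_enat_def[symmetric])

lemma gdist_edge: "(u,v) \<in> E \<Longrightarrow> gdist E u v \<le> 1"
  using gdist_le_walk[where E=E and xs="[u,v]" and u=u and v=v] by (simp add: one_enat_def)

lemma gdist_zero: "gdist E u v = 0 \<Longrightarrow> u = v"
proof -
  assume a: "gdist E u v = 0"
  then obtain xs where "walk E xs u v" "gdist E u v = enat (length xs - 1)"
    using gdist_attained[of E u v] by auto
  then show ?thesis using a by (cases xs) (auto simp: zero_enat_def)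
qed

lemma gdist_triangle: "gdist E u w \<le> gdist E u v + gdist E v w"
proof (cases "gdist E u v = \<infinity> \<or> gdist E v w = \<infinity>")
  case True then show ?thesis by auto
next
  case False
  then obtain xs ys where xs: "walk E xs u v" "gdist E u v = enat (length xs - 1)"
    and ys: "walk E ys v w" "gdist E v w = enat (length ys - 1)"
    using gdist_attained by metis
  obtain y ys' where yy: "ys = y # ys'" using ys by (cases ys) auto
  have yv: "y = v" using ys yy by simp
  have s1: "successively (\<lambda>a b. (a, b) \<in> E) xs" using xs by blast
  have s2: "successively (\<lambda>a b. (a, b) \<in> E) (v # ys')" using ys yv unfolding yy by simp
  have s3: "successively (\<lambda>a b. (a, b) \<in> E) ys'" and s4: "ys' \<noteq> [] \<Longrightarrow> (v, hd ys') \<in> E"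
    using s2 by (auto simp add: successively_Cons)
  have lx: "last xs = v" using xs by blast
  have "successively (\<lambda>a b. (a, b) \<in> E) (xs @ ys')"
    unfolding successively_append_iff using s1 s3 s4 lx by blast
  moreover have "xs @ ys' \<noteq> []" using xs by blast
  moreover have "hd (xs @ ys') = u" using xs by simp
  moreover have "last (xs @ ys') = w"
  proof (cases "ys' = []")
    case True then show ?thesis using lx ys yy yv by simp
  next
    case False then show ?thesis using ys yy by (simp add: last_append)
  qed
  ultimately have w: "walk E (xs @ ys') u w" by blast
  have "length (xs @ ys') - 1 = (length xs - 1) + (length ys - 1)"
    using xs yy by (cases xs) auto
  then show ?thesis using gdist_le_walk[OF w] xs ys by simp
qed

lemma gdist_sym: assumes "sym E" shows "gdist E u v \<le> gdist E v u"
proof (cases "gdist E v u = \<infinity>")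
  case True then show ?thesis by simp
next
  case False
  then obtain xs where xs: "walk E xs v u" "gdist E v u = enat (length xs - 1)"
    using gdist_attained by metis
  have "walk E (rev xs) u v" using xs assms
    by (auto simp: hd_rev last_rev sym_def elim!: successively_mono)
  then show ?thesis using gdist_le_walk[where E=E and xs="rev xs"] xs by simp
qed


lemma enat_fin1: "(a::enat) \<le> enat n + 1 \<Longrightarrow> \<exists>m. a = enat m"
  by (cases a) (auto simp: one_enat_def)

lemma Inf_enat_in: "A \<noteq> {} \<Longrightarrow> Inf (A::enat set) \<in> A"
  unfolding Inf_enat_def by (auto intro: LeastI)

locale cl =
  fixes V :: "'a set" and E :: "('a \<times> 'a) set" and r :: nat and \<delta> :: "'a \<Rightarrow> nat"
    and ID :: "'a \<Rightarrow> nat" and pr :: "'a \<Rightarrow> 'a \<Rightarrow> 'a"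
  assumes fin: "finite V" and EV: "E \<subseteq> V \<times> V" and symE: "sym E"
    and inj: "inj_on ID V" and dle: "\<forall>v\<in>V. \<delta> v \<le> r" and vp: "valid_pred V E pr"
begin

abbreviation "lv x \<equiv> level V E r \<delta> x"
abbreviation "c x \<equiv> center V E r \<delta> ID x"
abbreviation "dd u x \<equiv> dU E r \<delta> u x"
abbreviation "H \<equiv> spannerH V E r \<delta> ID pr"

definition good where "good u w \<longleftrightarrow> dd u w = lv w \<or> (dd u w = lv w + 1 \<and> ID u < ID (c w))"

lemma level_attained: "x \<in> V \<Longrightarrow> \<exists>u\<in>V. dd u x = lv x"
proof -
  assume "x \<in> V"
  then have "(\<lambda>u. dd u x) ` V \<noteq> {}" by auto
  from Inf_enat_in[OF this] show ?thesis unfolding level_def by auto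
qed

lemma level_le: "u \<in> V \<Longrightarrow> lv x \<le> dd u x"
  unfolding level_def by (rule INF_lower)

lemma level_fin: "x \<in> V \<Longrightarrow> lv x \<le> enat r"
proof -
  assume x: "x \<in> V"
  have "dd x x = enat (r - \<delta> x)" unfolding dU_def by (simp add: gdist_refl)
  then show ?thesis using level_le[OF x, of x] by (metis diff_le_self enat_ord_simps(1) order_trans)
qed

lemma center_props: assumes "x \<in> V"
  shows "c x \<in> V" "dd (c x) x = lv x" "\<And>u. u \<in> V \<Longrightarrow> dd u x = lv x \<Longrightarrow> ID (c x) \<le> ID u"
proof -
  obtain u where "u \<in> V" "dd u x = lv x" using level_attained[OF assms] by blast
  then have P: "c x \<in> V \<and> dd (c x) x = lv x" unfolding center_def
    using arg_min_natI[where P="\<lambda>u. u \<in> V \<and> dd u x = lv x" and m=ID] by blast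
  then show "c x \<in> V" "dd (c x) x = lv x" by auto
  show "\<And>u. u \<in> V \<Longrightarrow> dd u x = lv x \<Longrightarrow> ID (c x) \<le> ID u"
    unfolding center_def by (rule arg_min_nat_le) simp
qed

lemma dd_edge: "(x,y) \<in> E \<Longrightarrow> dd u y \<le> dd u x + 1"
proof -
  assume "(x,y) \<in> E"
  then have "gdist E u y \<le> gdist E u x + 1"
    using gdist_triangle[of E u y x] gdist_edge[of x y E] by (meson add_left_mono order_trans)
  then show ?thesis unfolding dU_def by (metis add.assoc add_left_mono)
qed

lemma lv_edge: "(x,y) \<in> E \<Longrightarrow> lv y \<le> lv x + 1"
proof -
  assume e: "(x,y) \<in> E"
  then have "x \<in> V" using EV by auto
  then obtain u where u: "u \<in> V" "dd u x = lv x" using level_attained by blast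
  then show ?thesis using level_le[OF u(1), of y] dd_edge[OF e, of u] by simp
qed

lemma gd_le_dd: "gdist E u x \<le> dd u x"
  unfolding dU_def by simp

lemma good_fin: "x \<in> V \<Longrightarrow> good u x \<Longrightarrow> dd u x \<le> enat r + 1"
  unfolding good_def using level_fin[of x]
  by (metis add_right_mono order.trans le_iff_add)


lemma pred_props: assumes "u \<in> V" "w \<in> V" "u \<noteq> w" "gdist E u w \<noteq> \<infinity>"
  shows "pr u w \<in> V" "(pr u w, w) \<in> E" "(w, pr u w) \<in> E" "gdist E u (pr u w) + 1 = gdist E u w"
    "dd u (pr u w) + 1 = dd u w"
proof -
  show a: "pr u w \<in> V" "(pr u w, w) \<in> E" and b: "gdist E u (pr u w) + 1 = gdist E u w"
    using vp assms unfolding valid_pred_def by auto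
  show "(w, pr u w) \<in> E" using a symE by (auto simp: sym_def)
  show "dd u (pr u w) + 1 = dd u w" unfolding dU_def using b by (metis add.assoc)
qed

lemma good_dfin: assumes "w \<in> V" "good u w" shows "gdist E u w \<noteq> \<infinity>"
proof -
  have "dd u w \<noteq> \<infinity>" using enat_fin1[OF good_fin[OF assms]] by auto
  then show ?thesis unfolding dU_def by (cases "gdist E u w") auto
qed

lemma good_step: assumes u: "u \<in> V" and w: "w \<in> V" and uw: "u \<noteq> w" and g: "good u w"
  shows "good u (pr u w)"
proof -
  define z where "z = pr u w"
  have fin: "gdist E u w \<noteq> \<infinity>" using good_dfin[OF w g] .
  note pp = pred_props[OF u w uw fin, folded z_def]
  have zV: "z \<in> V" using pp by simp
  have l1: "lv w \<le> lv z + 1" using lv_edge[OF pp(2)] .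
  have l2: "lv z \<le> dd u z" using level_le[OF u] .
  have e: "dd u z + 1 = dd u w" using pp by simp
  obtain Lw where Lw: "lv w = enat Lw" using level_fin[OF w] by (cases "lv w") auto
  obtain Lz where Lz: "lv z = enat Lz" using level_fin[OF zV] by (cases "lv z") auto
  show ?thesis unfolding z_def[symmetric]
  proof (cases "dd u w = lv w")
    case True
    then obtain D where D: "dd u z = enat D" using e Lw by (cases "dd u z") auto
    have "dd u z = lv z" using True e l1 l2 Lw Lz D by (simp add: one_enat_def)
    then show "good u z" unfolding good_def by simp
  next
    case False
    then have F: "dd u w = lv w + 1" "ID u < ID (c w)" using g unfolding good_def by auto
    then have dz: "dd u z = lv w" using e Lw by (cases "dd u z") (auto simp: one_enat_def)
    show "good u z"
    proof (cases "lv z = lv w")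
      case True then show ?thesis using dz unfolding good_def by simp
    next
      case False
      then have lw: "lv w = lv z + 1" using l1 l2 dz Lw Lz by (auto simp: one_enat_def)
      have cz: "c z \<in> V" "dd (c z) z = lv z" using center_props[OF zV] by auto
      have "dd (c z) w \<le> lv w" using dd_edge[OF pp(2), of "c z"] cz lw by simp
      then have "dd (c z) w = lv w" using level_le[OF cz(1), of w] by simp
      then have "ID (c w) \<le> ID (c z)" using center_props(3)[OF w cz(1)] by simp
      then show ?thesis using F lw dz unfolding good_def by simp
    qed
  qed
qed

lemma H_edge: assumes u: "u \<in> V" and w: "w \<in> V" and uw: "u \<noteq> w" and g: "good u w"
  shows "(w, pr u w) \<in> H"
proof -
  have "(w, pr u w) \<in> Cset V E r \<delta> ID pr w" using assms unfolding Cset_def good_def by blast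
  then show ?thesis using w unfolding spannerH_def Let_def by blast
qed

lemma symH: "sym H" unfolding spannerH_def Let_def sym_def by blast

lemma good_path: "\<forall>w. u \<in> V \<longrightarrow> w \<in> V \<longrightarrow> good u w \<longrightarrow> gdist E u w = enat n \<longrightarrow> gdist H w u \<le> enat n"
proof (induction n)
  case 0
  then show ?case using gdist_zero gdist_refl by (metis order_refl zero_enat_def)
next
  case (Suc n)
  show ?case
  proof (intro allI impI)
    fix w assume u: "u \<in> V" and w: "w \<in> V" and g: "good u w" and d: "gdist E u w = enat (Suc n)"
    have uw: "u \<noteq> w" using d gdist_refl by (metis Zero_not_Suc zero_enat_def enat.inject)
    note pp = pred_props[OF u w uw, unfolded d, simplified]
    have dz: "gdist E u (pr u w) = enat n" using pp(4)
      by (metis add.commute eSuc_enat eSuc_plus_1 eSuc_inject)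
    have "gdist H (pr u w) u \<le> enat n" using Suc.IH pp(1) u good_step[OF u w uw g] dz by blast
    moreover have "gdist H w (pr u w) \<le> 1" using gdist_edge H_edge[OF u w uw g] by metis
    ultimately have "gdist H w u \<le> 1 + enat n"
      using gdist_triangle[of H w u "pr u w"] by (meson add_mono order_trans)
    then show "gdist H w u \<le> enat (Suc n)" by (simp add: one_enat_def)
  qed
qed

lemma good_H: assumes "u \<in> V" "w \<in> V" "good u w" shows "gdist H w u \<le> gdist E u w"
  using good_path good_dfin[OF assms(2,3)] assms by (cases "gdist E u w") auto


lemma half: assumes x: "x \<in> V" and y: "y \<in> V" and e: "(x,y) \<in> E" and g: "good (c x) y"
  shows "gdist H y x \<le> enat (2*r+1)"
proof -
  define a where "a = c x"
  have a: "a \<in> V" "dd a x = lv x" using center_props[OF x] a_def by auto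
  have gx: "good a x" using a unfolding good_def by simp
  have h1: "gdist H a x \<le> gdist E a x"
    using good_H[OF a(1) x gx] gdist_sym[OF symH, of a x] by simp
  have h2: "gdist H y a \<le> gdist E a y" using good_H[OF a(1) y] g a_def by simp
  have d1: "gdist E a x \<le> enat r" using gd_le_dd[of a x] a level_fin[OF x] by simp
  have d2: "gdist E a y \<le> gdist E a x + 1"
    using gdist_triangle[of E a y x] gdist_edge[OF e] by (meson add_left_mono order_trans)
  have "gdist H y x \<le> gdist H y a + gdist H a x" by (rule gdist_triangle)
  also have "\<dots> \<le> (gdist E a x + 1) + gdist E a x" using h1 h2 d2 by (meson add_mono order_trans)
  also have "\<dots> \<le> (enat r + 1) + enat r" using d1 by (meson add_mono order_refl)
  finally show ?thesis by (simp add: one_enat_def mult_2)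
qed

lemma edge_H: assumes e: "(x,y) \<in> E" shows "gdist H x y \<le> enat (2*r+1)"
proof -
  have x: "x \<in> V" and y: "y \<in> V" using e EV by auto
  have e': "(y,x) \<in> E" using e symE by (auto simp: sym_def)
  define a where "a = c x"
  define b where "b = c y"
  have a: "a \<in> V" "dd a x = lv x" using center_props[OF x] a_def by auto
  have b: "b \<in> V" "dd b y = lv y" using center_props[OF y] b_def by auto
  have "good a y \<or> good b x"
  proof (rule ccontr)
    assume n: "\<not> (good a y \<or> good b x)"
    obtain Lx where Lx: "lv x = enat Lx" using level_fin[OF x] by (cases "lv x") auto
    obtain Ly where Ly: "lv y = enat Ly" using level_fin[OF y] by (cases "lv y") auto
    have 1: "dd a y \<le> lv x + 1" using dd_edge[OF e, of a] a by simp
    have 2: "dd b x \<le> lv y + 1" using dd_edge[OF e', of b] b by simp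
    have 3: "lv y \<le> dd a y" "lv x \<le> dd b x" using level_le a b by auto
    have n1: "dd a y \<noteq> lv y" "dd b x \<noteq> lv x" using n unfolding good_def by auto
    obtain Da where Da: "dd a y = enat Da" using enat_fin1[of "dd a y" Lx] 1 Lx by auto
    obtain Db where Db: "dd b x = enat Db" using enat_fin1[of "dd b x" Ly] 2 Ly by auto
    have eq: "Lx = Ly" "Da = Lx + 1" "Db = Lx + 1"
      using 1 2 3 n1 Lx Ly Da Db by (auto simp: one_enat_def)
    have "a \<noteq> b" using eq Da Db b(2) Ly by auto
    then have "ID a \<noteq> ID b" using inj a b by (auto simp: inj_on_def)
    then have "ID a < ID (c y) \<or> ID b < ID (c x)" using a_def b_def by auto
    then show False using n eq Lx Ly Da Db unfolding good_def by (auto simp: one_enat_def)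
  qed
  then show ?thesis
  proof
    assume "good a y"
    then have "gdist H y x \<le> enat (2*r+1)" using half[OF x y e] a_def by simp
    then show ?thesis using gdist_sym[OF symH, of x y] by simp
  next
    assume "good b x"
    then show ?thesis using half[OF y x e'] b_def by simp
  qed
qed

lemma walk_H: "walk E xs u v \<Longrightarrow> gdist H u v \<le> enat ((2*r+1) * (length xs - 1))"
proof (induction xs arbitrary: u)
  case Nil then show ?case by simp
next
  case (Cons x ys)
  note prems = Cons.prems and IH = Cons.IH
  show ?case
  proof (cases ys)
    case Nil then show ?thesis using prems gdist_refl[of H u] by (auto simp: zero_enat_def)
  next
    case (Cons y zs)
    have e: "(u,y) \<in> E" using prems Cons by auto
    have "walk E ys y v" using prems Cons by auto
    then have ih: "gdist H y v \<le> enat ((2*r+1) * (length ys - 1))" using IH by blast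
    have "gdist H u v \<le> gdist H u y + gdist H y v" by (rule gdist_triangle)
    also have "\<dots> \<le> enat (2*r+1) + enat ((2*r+1) * (length ys - 1))"
      using edge_H[OF e] ih by (rule add_mono)
    also have "\<dots> = enat ((2*r+1) * (length (x # ys) - 1))" using Cons
      by (simp add: algebra_simps)
    finally show ?thesis .
  qed
qed

lemma main: assumes "u \<in> V" "v \<in> V" shows "gdist H u v \<le> enat (2*r+1) * gdist E u v"
proof (cases "gdist E u v = \<infinity>")
  case True then show ?thesis by (simp add: imult_is_infinity)
next
  case False
  then obtain xs where xs: "walk E xs u v" "gdist E u v = enat (length xs - 1)"
    using gdist_attained by metis
  then show ?thesis using walk_H[OF xs(1)] by simp
qed

end

theorem lemma10:
  fixes V :: "'a set" and E :: "('a \<times> 'a) set" and ID :: "'a \<Rightarrow> nat"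
    and \<delta> :: "'a \<Rightarrow> nat" and pr :: "'a \<Rightarrow> 'a \<Rightarrow> 'a" and k :: nat
  assumes "finite V" and "E \<subseteq> V \<times> V" and "sym E"
    and "inj_on ID V"
    and "k \<ge> 2"
    and "\<forall>v\<in>V. \<delta> v \<le> k - 1"
    and "valid_pred V E pr"
  shows "\<forall>u\<in>V. \<forall>v\<in>V.
           gdist (spannerH V E (k - 1) \<delta> ID pr) u v \<le> enat (2 * k - 1) * gdist E u v"
proof -
  interpret cl V E "k - 1" \<delta> ID pr using assms by unfold_locales auto
  have eq: "2 * (k - 1) + 1 = 2 * k - 1" using assms(5) by simp
  show ?thesis
  proof (intro ballI)
    fix u v assume "u \<in> V" "v \<in> V"
    from main[OF this] show "gdist (spannerH V E (k - 1) \<delta> ID pr) u v \<le> enat (2 * k - 1) * gdist E u v"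
      unfolding eq .
  qed
qed

end
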